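(* Let $\mathbb{V}$ be a finite vocabulary, $\theta$ a language model, $k\ge 1$, $B\ge 1$, $T\ge 1$, a prefix $\mathbf{z}_{\mathrm{pre}}$ and a target suffix $\mathbf{z}_{\mathrm{suf}}\in\mathbb{V}^T$, as described in the context. Run top-$k$ constrained beam search ($k$-CBS) with beam width $B$, and let $C_T$ be its final candidate set. Let $F_{(B)}\subseteq C_T$ consist of the (at most) $B$ pairs of $C_T$ with the largest second coordinate (ties broken by a fixed deterministic rule). For $\mathsf{dist}\in\{\mathsf{Hamming},\mathsf{Levenshtein}\}$ and $\varepsilon\ge 0$ define $$\mathrm{LB}^{(B)}_{\varepsilon,\mathsf{dist}}=\sum_{(\mathbf{z}_{\mathrm{pre}}\Vert\mathbf{x},\,\ell)\in F_{(B)}\,:\,\mathbf{x}\in\mathbb{B}^{\mathsf{dist}}_{\varepsilon}(\mathbf{z}_{\mathrm{suf}})}\exp(\ell).$$ Then $\mathrm{LB}^{(B)}_{\varepsilon,\mathsf{dist}}\le p^{\mathsf{dist}}_{\mathbf{z},\varepsilon}$.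
   Context: Let $\mathbb{V}$ be a finite vocabulary containing a designated end-of-sequence token EOS. A language model $\theta$ assigns to every finite token sequence (history) $\mathbf{h}$ a probability distribution $\Pr_\theta(\cdot\mid\mathbf{h})$ on $\mathbb{V}$ with $\Pr_\theta(v\mid\mathbf{h})>0$ for all $v$. For an integer $k\ge1$ and a history $\mathbf{h}$, let $S(\mathbf{h})\subseteq\mathbb{V}$ be the set of $k$ tokens with the largest values of $\Pr_\theta(\cdot\mid\mathbf{h})$ (ties broken by a fixed deterministic rule). The top-$k$ decoding distribution is $\Pr_{\theta,\phi}(v\mid\mathbf{h})=\Pr_\theta(v\mid\mathbf{h})/\sum_{u\in S(\mathbf{h})}\Pr_\theta(u\mid\mathbf{h})$ for $v\in S(\mathbf{h})$ and $0$ otherwise. Fix a prefix $\mathbf{z}_{\mathrm{pre}}\in\mathbb{V}^L$ and a target suffix $\mathbf{z}_{\mathrm{suf}}\in\mathbb{V}^T$. For $\mathbf{x}\in\mathbb{V}^T$, $\Pr_{\theta,\phi}(\mathbf{x}\mid\mathbf{z}_{\mathrm{pre}})=\prod_{t=1}^T\Pr_{\theta,\phi}(x_t\mid\mathbf{z}_{\mathrm{pre}}\Vert x_{1:t-1})$ ($\Vert$ is concatenation). For $\mathbf{b},\mathbf{c}\in\mathbb{V}^T$, $\mathsf{Hamming}(\mathbf{b},\mathbf{c})=\#\{t: b_t\ne c_t\}$ and $\mathsf{Levenshtein}(\mathbf{b},\mathbf{c})$ is the minimum number of unit-cost single-token substitutions, insertions and deletions transforming $\mathbf{b}$ into $\mathbf{c}$.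 The $\varepsilon$-ball is $\mathbb{B}^{\mathsf{dist}}_{\varepsilon}(\mathbf{z}_{\mathrm{suf}})=\{\mathbf{v}\in\mathbb{V}^T:\mathsf{dist}(\mathbf{v},\mathbf{z}_{\mathrm{suf}})\le\varepsilon\}$, and the near-verbatim extraction probability is $p^{\mathsf{dist}}_{\mathbf{z},\varepsilon}=\sum_{\mathbf{v}\in\mathbb{B}^{\mathsf{dist}}_{\varepsilon}(\mathbf{z}_{\mathrm{suf}})}\Pr_{\theta,\phi}(\mathbf{v}\mid\mathbf{z}_{\mathrm{pre}})$. Top-$k$ constrained beam search ($k$-CBS) with beam width $B$: set $L_0=\{(\mathbf{z}_{\mathrm{pre}},0)\}$. For $t=1,\dots,T$: let $C_t=\{(\mathbf{h}\Vert v,\ \ell+\log\Pr_{\theta,\phi}(v\mid\mathbf{h})):(\mathbf{h},\ell)\in L_{t-1},\ v\in S(\mathbf{h})\}$. If $t=T$, output $F=C_T$. If $t<T$, delete from $C_t$ every pair whose history ends in EOS, and let $L_t$ be the (at most) $B$ pairs of $C_t$ with the largest second coordinate (deterministic tie-breaking). Every pair in $C_T$ has the form $(\mathbf{z}_{\mathrm{pre}}\Vert\mathbf{x},\ell)$ with $\mathbf{x}\in\mathbb{V}^T$. *)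

theory Defs
  imports Complex_Main
begin

definition is_lm :: "('v::finite list \<Rightarrow> 'v \<Rightarrow> real) \<Rightarrow> bool" where
  "is_lm \<theta> \<longleftrightarrow> (\<forall>h v. \<theta> h v > 0) \<and> (\<forall>h. (\<Sum>v\<in>UNIV. \<theta> h v) = 1)"

text \<open>S is a top-k selection rule (deterministic, being a function): for every history,
  S h consists of k tokens (all of them if fewer exist) of largest probability.\<close>
definition is_topk_rule :: "('v::finite list \<Rightarrow> 'v \<Rightarrow> real) \<Rightarrow> nat \<Rightarrow> ('v list \<Rightarrow> 'v set) \<Rightarrow> bool" where
  "is_topk_rule \<theta> k S \<longleftrightarrow>
     (\<forall>h. card (S h) = min k (card (UNIV :: 'v set)) \<and>
          (\<forall>v\<in>S h. \<forall>u. u \<notin> S h \<longrightarrow> \<theta> h u \<le> \<theta> h v))"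

definition is_topB_rule :: "nat \<Rightarrow> (('v list \<times> real) set \<Rightarrow> ('v list \<times> real) set) \<Rightarrow> bool" where
  "is_topB_rule B sel \<longleftrightarrow>
     (\<forall>C. finite C \<longrightarrow> sel C \<subseteq> C \<and> card (sel C) = min B (card C) \<and>
          (\<forall>p\<in>sel C. \<forall>q\<in>C - sel C. snd q \<le> snd p))"

definition topk_prob :: "('v list \<Rightarrow> 'v \<Rightarrow> real) \<Rightarrow> ('v list \<Rightarrow> 'v set) \<Rightarrow> 'v list \<Rightarrow> 'v \<Rightarrow> real" where
  "topk_prob \<theta> S h v = (if v \<in> S h then \<theta> h v / (\<Sum>u\<in>S h. \<theta> h u) else 0)"

definition seq_prob :: "('v list \<Rightarrow> 'v \<Rightarrow> real) \<Rightarrow> ('v list \<Rightarrow> 'v set) \<Rightarrow> 'v list \<Rightarrow> 'v list \<Rightarrow> real" where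
  "seq_prob \<theta> S zpre x = (\<Prod>t<length x. topk_prob \<theta> S (zpre @ take t x) (x ! t))"

definition cands :: "('v list \<Rightarrow> 'v \<Rightarrow> real) \<Rightarrow> ('v list \<Rightarrow> 'v set) \<Rightarrow> ('v list \<times> real) set \<Rightarrow> ('v list \<times> real) set" where
  "cands \<theta> S L = {(h @ [v], l + ln (topk_prob \<theta> S h v)) | h l v. (h, l) \<in> L \<and> v \<in> S h}"

text \<open>beam ... t = L_t (for t < T).\<close>
fun beam :: "('v list \<Rightarrow> 'v \<Rightarrow> real) \<Rightarrow> ('v list \<Rightarrow> 'v set) \<Rightarrow> 'v \<Rightarrow>
    (('v list \<times> real) set \<Rightarrow> ('v list \<times> real) set) \<Rightarrow> 'v list \<Rightarrow> nat \<Rightarrow> ('v list \<times> real) set" where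
  "beam \<theta> S eos sel zpre 0 = {(zpre, 0)}"
| "beam \<theta> S eos sel zpre (Suc t) =
     sel {p \<in> cands \<theta> S (beam \<theta> S eos sel zpre t). last (fst p) \<noteq> eos}"

text \<open>Final candidate set C_T (T \<ge> 1).\<close>
definition final_cands where
  "final_cands \<theta> S eos sel zpre T = cands \<theta> S (beam \<theta> S eos sel zpre (T - 1))"

definition hamming :: "'a list \<Rightarrow> 'a list \<Rightarrow> nat" where
  "hamming b c = card {t. t < length b \<and> b ! t \<noteq> c ! t}"

definition edit1 :: "'a list \<Rightarrow> 'a list \<Rightarrow> bool" where
  "edit1 b c \<longleftrightarrow> (\<exists>u w x y.
      (b = u @ [x] @ w \<and> c = u @ [y] @ w) \<or>
      (b = u @ w \<and> c = u @ [y] @ w) \<or>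
      (b = u @ [x] @ w \<and> c = u @ w))"

definition levenshtein :: "'a list \<Rightarrow> 'a list \<Rightarrow> nat" where
  "levenshtein b c = (LEAST n. (edit1 ^^ n) b c)"

definition extraction_prob where
  "extraction_prob \<theta> S zpre zsuf dst \<epsilon> =
     (\<Sum>v\<in>{v. length v = length zsuf \<and> real (dst v zsuf) \<le> \<epsilon>}. seq_prob \<theta> S zpre v)"

definition beam_LB where
  "beam_LB F zpre zsuf dst \<epsilon> =
     (\<Sum>p\<in>{p\<in>F. \<exists>x. fst p = zpre @ x \<and> length x = length zsuf \<and> real (dst x zsuf) \<le> \<epsilon>}. exp (snd p))"

end

theory Submission
  imports Defs
begin

lemma seq_prob_snoc:
  "seq_prob \<theta> S zpre (x @ [v]) = seq_prob \<theta> S zpre x * topk_prob \<theta> S (zpre @ x) v"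
proof -
  have "seq_prob \<theta> S zpre (x @ [v]) =
     (\<Prod>t<length x. topk_prob \<theta> S (zpre @ take t (x@[v])) ((x@[v]) ! t)) * topk_prob \<theta> S (zpre @ x) v"
    unfolding seq_prob_def by (simp add: prod.lessThan_Suc)
  also have "(\<Prod>t<length x. topk_prob \<theta> S (zpre @ take t (x@[v])) ((x@[v]) ! t)) = seq_prob \<theta> S zpre x"
    unfolding seq_prob_def by (rule prod.cong) (auto simp: nth_append)
  finally show ?thesis .
qed

definition PP where
  "PP \<theta> S zpre t = (\<lambda>x. (zpre @ x, ln (seq_prob \<theta> S zpre x))) ` {x. length x = t \<and> seq_prob \<theta> S zpre x > 0}"

lemma PP_finite: "finite (PP \<theta> S zpre t)" for zpre :: "'v::finite list"
proof -
  have "finite {x::'v::finite list. length x = t}" using finite_lists_length_eq[OF finite_UNIV[where 'a='v]] by simp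
  then have "finite {x::'v list. length x = t \<and> seq_prob \<theta> S zpre x > 0}"
    by (rule finite_subset[rotated]) auto
  then show ?thesis unfolding PP_def by (rule finite_imageI)
qed

lemma topk_nonneg:
  assumes "is_lm \<theta>" shows "topk_prob \<theta> S h v \<ge> 0"
proof -
  have "\<And>u. \<theta> h u \<ge> 0" using assms by (simp add: is_lm_def less_imp_le)
  then have "(\<Sum>u\<in>S h. \<theta> h u) \<ge> 0" by (simp add: sum_nonneg)
  then show ?thesis using \<open>\<And>u. \<theta> h u \<ge> 0\<close> unfolding topk_prob_def by simp
qed

lemma topk_pos:
  assumes "is_lm \<theta>" "k \<ge> 1" "is_topk_rule \<theta> k S" "v \<in> S h"
  shows "topk_prob \<theta> S h v > 0"
proof -
  have ne: "S h \<noteq> {}" using assms(4) by auto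
  have fin: "finite (S h)" by simp
  have "(\<Sum>u\<in>S h. \<theta> h u) > 0"
    using assms(1) ne fin by (intro sum_pos) (auto simp: is_lm_def)
  then show ?thesis using assms(1,4) by (auto simp: topk_prob_def is_lm_def)
qed

lemma cands_PP:
  assumes "is_lm \<theta>" "k \<ge> 1" "is_topk_rule \<theta> k S" "L \<subseteq> PP \<theta> S zpre t"
  shows "cands \<theta> S L \<subseteq> PP \<theta> S zpre (Suc t)"
proof
  fix p assume "p \<in> cands \<theta> S L"
  then obtain h l v where p: "p = (h @ [v], l + ln (topk_prob \<theta> S h v))" "(h, l) \<in> L" "v \<in> S h"
    unfolding cands_def by blast
  then obtain x where x: "h = zpre @ x" "l = ln (seq_prob \<theta> S zpre x)" "length x = t"
    "seq_prob \<theta> S zpre x > 0"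
    using assms(4) unfolding PP_def by auto
  have tp: "topk_prob \<theta> S h v > 0" using topk_pos[OF assms(1-3) p(3)] .
  have sp: "seq_prob \<theta> S zpre (x @ [v]) = seq_prob \<theta> S zpre x * topk_prob \<theta> S h v"
    using seq_prob_snoc x(1) by metis
  have "p = (zpre @ (x @ [v]), ln (seq_prob \<theta> S zpre (x @ [v])))"
    using p(1) x sp tp by (simp add: ln_mult)
  moreover have "seq_prob \<theta> S zpre (x @ [v]) > 0" using sp x(4) tp by simp
  ultimately show "p \<in> PP \<theta> S zpre (Suc t)" unfolding PP_def using x(3) by auto
qed

lemma beam_PP:
  assumes "is_lm \<theta>" "k \<ge> 1" "is_topk_rule \<theta> k S" "is_topB_rule B sel"
  shows "beam \<theta> S eos sel zpre t \<subseteq> PP \<theta> S zpre t"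
proof (induction t)
  case 0
  have "seq_prob \<theta> S zpre [] = 1" by (simp add: seq_prob_def)
  then show ?case by (auto simp: PP_def)
next
  case (Suc t)
  let ?C = "{p \<in> cands \<theta> S (beam \<theta> S eos sel zpre t). last (fst p) \<noteq> eos}"
  have "?C \<subseteq> PP \<theta> S zpre (Suc t)" using cands_PP[OF assms(1-3) Suc.IH] by auto
  moreover then have "finite ?C" using PP_finite finite_subset by blast
  then have "sel ?C \<subseteq> ?C" using assms(4) by (simp add: is_topB_rule_def)
  ultimately show ?case by auto
qed

theorem theorem2:
  fixes \<theta> :: "'v::finite list \<Rightarrow> 'v \<Rightarrow> real"
    and S :: "'v list \<Rightarrow> 'v set"
    and sel :: "('v list \<times> real) set \<Rightarrow> ('v list \<times> real) set"
    and eos :: 'v and k B T :: nat and zpre zsuf :: "'v list"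
    and dst :: "'v list \<Rightarrow> 'v list \<Rightarrow> nat" and \<epsilon> :: real
  assumes "is_lm \<theta>"
    and "k \<ge> 1" and "B \<ge> 1" and "T \<ge> 1"
    and "is_topk_rule \<theta> k S"
    and "is_topB_rule B sel"
    and "length zsuf = T"
    and "dst \<in> {hamming, levenshtein}"
    and "\<epsilon> \<ge> 0"
  shows "beam_LB (sel (final_cands \<theta> S eos sel zpre T)) zpre zsuf dst \<epsilon>
           \<le> extraction_prob \<theta> S zpre zsuf dst \<epsilon>"
proof -
  let ?FC = "final_cands \<theta> S eos sel zpre T"
  have "?FC \<subseteq> PP \<theta> S zpre (Suc (T - 1))"
    unfolding final_cands_def by (rule cands_PP[OF assms(1,2,5) beam_PP[OF assms(1,2,5,6)]])
  then have FC: "?FC \<subseteq> PP \<theta> S zpre T" using assms(4) by simp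
  then have "finite ?FC" using PP_finite finite_subset by blast
  then have "sel ?FC \<subseteq> ?FC" using assms(6) by (simp add: is_topB_rule_def)
  with FC have F: "sel ?FC \<subseteq> PP \<theta> S zpre T" by blast
  define g where "g = (\<lambda>x. (zpre @ x, ln (seq_prob \<theta> S zpre x)))"
  define Ball where "Ball = {v. length v = length zsuf \<and> real (dst v zsuf) \<le> \<epsilon>}"
  define F' where "F' = {p\<in>sel ?FC. \<exists>x. fst p = zpre @ x \<and> length x = length zsuf \<and> real (dst x zsuf) \<le> \<epsilon>}"
  define X where "X = {x. g x \<in> F' \<and> seq_prob \<theta> S zpre x > 0}"
  have inj: "inj g" unfolding g_def inj_def by auto
  have F'eq: "F' = g ` X"
  proof
    show "F' \<subseteq> g ` X"
    proof
      fix p assume "p \<in> F'"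
      then have "p \<in> PP \<theta> S zpre T" using F unfolding F'_def by auto
      then obtain x where "p = g x" "seq_prob \<theta> S zpre x > 0" unfolding PP_def g_def by auto
      then show "p \<in> g ` X" using \<open>p \<in> F'\<close> unfolding X_def by auto
    qed
  qed (auto simp: X_def)
  have XB: "X \<subseteq> Ball"
  proof
    fix x assume "x \<in> X"
    then have "g x \<in> F'" by (simp add: X_def)
    then show "x \<in> Ball" unfolding F'_def g_def Ball_def by auto
  qed
  have finB: "finite Ball"
  proof -
    have "finite {x::'v list. length x = length zsuf}" using finite_lists_length_eq[OF finite_UNIV[where 'a='v]] by simp
    then show ?thesis unfolding Ball_def by (rule finite_subset[rotated]) auto
  qed
  have "beam_LB (sel ?FC) zpre zsuf dst \<epsilon> = (\<Sum>p\<in>F'. exp (snd p))"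
    unfolding beam_LB_def F'_def ..
  also have "\<dots> = (\<Sum>x\<in>X. exp (snd (g x)))"
    unfolding F'eq by (rule sum.reindex[OF inj_on_subset[OF inj subset_UNIV], unfolded comp_def])
  also have "\<dots> = (\<Sum>x\<in>X. seq_prob \<theta> S zpre x)"
    by (rule sum.cong) (auto simp: g_def X_def)
  also have "\<dots> \<le> (\<Sum>x\<in>Ball. seq_prob \<theta> S zpre x)"
  proof (rule sum_mono2[OF finB XB])
    fix x show "0 \<le> seq_prob \<theta> S zpre x"
      unfolding seq_prob_def using topk_nonneg[OF assms(1)] by (simp add: prod_nonneg)
  qed
  also have "\<dots> = extraction_prob \<theta> S zpre zsuf dst \<epsilon>"
    unfolding extraction_prob_def Ball_def ..
  finally show ?thesis .
qed

end
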